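(* If $X$ is a second-countable well-filtered space, then the upper Vietoris topology and the Scott topology on $\mathsf{K}(X)$ coincide.
   Context: Spaces are $T_0$; specialization order $x\le y$ iff $x\in\overline{\{y\}}$; saturated = upper set. $\mathsf{K}(X)$ = nonempty compact saturated subsets ordered by reverse inclusion. Scott topology on a poset: upper sets $U$ such that every directed $D$ whose supremum exists and lies in $U$ meets $U$. Upper Vietoris topology on $\mathsf{K}(X)$: base $\Box U=\{K:K\subseteq U\}$, $U$ open. Well-filtered: for open $U$ and $\mathcal K\subseteq\mathsf{K}(X)$ filtered under inclusion, $\bigcap\mathcal K\subseteq U$ implies some $K\in\mathcal K$ lies in $U$. *)

theory Defs
  imports "HOL-Analysis.Analysis"
begin

definition spec_le :: "'a topology \<Rightarrow> 'a \<Rightarrow> 'a \<Rightarrow> bool" where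
  "spec_le X x y \<longleftrightarrow> x \<in> X closure_of {y}"

definition saturated_in :: "'a topology \<Rightarrow> 'a set \<Rightarrow> bool" where
  "saturated_in X A \<longleftrightarrow> A \<subseteq> topspace X \<and>
     (\<forall>x\<in>A. \<forall>y\<in>topspace X. spec_le X x y \<longrightarrow> y \<in> A)"

definition KX :: "'a topology \<Rightarrow> 'a set set" where
  "KX X = {K. K \<noteq> {} \<and> compactin X K \<and> saturated_in X K}"

definition box_set :: "'a topology \<Rightarrow> 'a set \<Rightarrow> 'a set set" where
  "box_set X U = {K \<in> KX X. K \<subseteq> U}"

definition upper_vietoris :: "'a topology \<Rightarrow> 'a set topology" where
  "upper_vietoris X = topology_generated_by {box_set X U | U. openin X U}"

definition directed_in :: "('b \<Rightarrow> 'b \<Rightarrow> bool) \<Rightarrow> 'b set \<Rightarrow> bool" where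
  "directed_in le D \<longleftrightarrow> D \<noteq> {} \<and> (\<forall>a\<in>D. \<forall>b\<in>D. \<exists>c\<in>D. le a c \<and> le b c)"

definition is_sup_in :: "'b set \<Rightarrow> ('b \<Rightarrow> 'b \<Rightarrow> bool) \<Rightarrow> 'b set \<Rightarrow> 'b \<Rightarrow> bool" where
  "is_sup_in P le D s \<longleftrightarrow> s \<in> P \<and> (\<forall>d\<in>D. le d s) \<and>
     (\<forall>t\<in>P. (\<forall>d\<in>D. le d t) \<longrightarrow> le s t)"

definition scott_open :: "'b set \<Rightarrow> ('b \<Rightarrow> 'b \<Rightarrow> bool) \<Rightarrow> 'b set \<Rightarrow> bool" where
  "scott_open P le U \<longleftrightarrow> U \<subseteq> P \<and>
     (\<forall>x\<in>U. \<forall>y\<in>P. le x y \<longrightarrow> y \<in> U) \<and>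
     (\<forall>D s. D \<subseteq> P \<and> directed_in le D \<and> is_sup_in P le D s \<and> s \<in> U \<longrightarrow> D \<inter> U \<noteq> {})"

definition scott_topology :: "'b set \<Rightarrow> ('b \<Rightarrow> 'b \<Rightarrow> bool) \<Rightarrow> 'b topology" where
  "scott_topology P le = topology (scott_open P le)"

definition filtered_family :: "'a set set \<Rightarrow> bool" where
  "filtered_family \<K> \<longleftrightarrow> \<K> \<noteq> {} \<and> (\<forall>A\<in>\<K>. \<forall>B\<in>\<K>. \<exists>C\<in>\<K>. C \<subseteq> A \<and> C \<subseteq> B)"

definition well_filtered :: "'a topology \<Rightarrow> bool" where
  "well_filtered X \<longleftrightarrow>
     (\<forall>U \<K>. openin X U \<and> \<K> \<subseteq> KX X \<and> filtered_family \<K> \<and> \<Inter>\<K> \<subseteq> U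
        \<longrightarrow> (\<exists>K\<in>\<K>. K \<subseteq> U))"

end

theory Submission
  imports Defs
begin

lemma open_upper:
  assumes "openin X U" "x \<in> U" "spec_le X x y"
  shows "y \<in> U"
  using assms unfolding spec_le_def in_closure_of by auto
lemma spec_le_trans:
  assumes "spec_le X x y" "spec_le X y z"
  shows "spec_le X x z"
  using assms unfolding spec_le_def in_closure_of by auto
lemma spec_le_refl: "x \<in> topspace X \<Longrightarrow> spec_le X x x"
  unfolding spec_le_def in_closure_of by auto

lemma sep_saturated:
  assumes "saturated_in X K" "y \<in> topspace X" "y \<notin> K"
  shows "\<exists>U. openin X U \<and> K \<subseteq> U \<and> y \<notin> U"
proof -
  have "\<forall>x\<in>K. \<exists>T. openin X T \<and> x \<in> T \<and> y \<notin> T"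
  proof
    fix x assume x: "x \<in> K"
    then have "\<not> spec_le X x y" using assms unfolding saturated_in_def by auto
    moreover have "x \<in> topspace X" using x assms unfolding saturated_in_def by auto
    ultimately show "\<exists>T. openin X T \<and> x \<in> T \<and> y \<notin> T"
      unfolding spec_le_def in_closure_of by auto
  qed
  then obtain T where T: "\<And>x. x \<in> K \<Longrightarrow> openin X (T x) \<and> x \<in> T x \<and> y \<notin> T x"
    by metis
  show ?thesis
    by (rule exI[of _ "\<Union>x\<in>K. T x"]) (use T in auto)
qed

lemma up_point_KX:
  assumes "x \<in> topspace X"
  shows "{y\<in>topspace X. spec_le X x y} \<in> KX X"
proof -
  let ?A = "{y\<in>topspace X. spec_le X x y}"
  have "x \<in> ?A" using assms spec_le_refl by auto
  moreover have "compactin X ?A"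
    unfolding compactin_def
  proof (intro conjI allI impI)
    fix \<U> assume h: "(\<forall>U\<in>\<U>. openin X U) \<and> ?A \<subseteq> \<Union>\<U>"
    with \<open>x \<in> ?A\<close> obtain U where U: "U \<in> \<U>" "x \<in> U" by auto
    have oU: "openin X U" using h U by blast
    have "?A \<subseteq> U" using open_upper[OF oU U(2)] by blast
    then show "\<exists>\<F>. finite \<F> \<and> \<F> \<subseteq> \<U> \<and> ?A \<subseteq> \<Union>\<F>"
      using U by (intro exI[of _ "{U}"]) auto
  qed blast
  moreover have "saturated_in X ?A"
    unfolding saturated_in_def by (blast intro: spec_le_trans)
  ultimately show ?thesis unfolding KX_def by auto
qed

lemma scott_Int:
  assumes S: "scott_open P le S" and T: "scott_open P le T"
  shows "scott_open P le (S \<inter> T)"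
    unfolding scott_open_def
  proof (intro conjI allI impI ballI)
    show "S \<inter> T \<subseteq> P" using S unfolding scott_open_def by blast
    fix x y assume "x \<in> S \<inter> T" "y \<in> P" "le x y"
    then show "y \<in> S \<inter> T" using S T unfolding scott_open_def by blast
  next
    fix D s assume h: "D \<subseteq> P \<and> directed_in le D \<and> is_sup_in P le D s \<and> s \<in> S \<inter> T"
    then obtain d1 where d1: "d1 \<in> D" "d1 \<in> S" using S unfolding scott_open_def by blast
    obtain d2 where d2: "d2 \<in> D" "d2 \<in> T" using h T unfolding scott_open_def by blast
    obtain c where c: "c \<in> D" "le d1 c" "le d2 c" using h d1 d2 unfolding directed_in_def by blast
    have "c \<in> P" using c h by blast
    then have "c \<in> S" "c \<in> T" using S T d1 d2 c unfolding scott_open_def by blast+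
    then show "D \<inter> (S \<inter> T) \<noteq> {}" using c by blast
  qed

lemma scott_Union:
  assumes K: "\<forall>S\<in>K. scott_open P le S"
  shows "scott_open P le (\<Union>K)"
    unfolding scott_open_def
  proof (intro conjI allI impI ballI)
    show "\<Union>K \<subseteq> P" using K unfolding scott_open_def by blast
    fix x y assume "x \<in> \<Union>K" "y \<in> P" "le x y"
    then show "y \<in> \<Union>K" using K unfolding scott_open_def by blast
  next
    fix D s assume h: "D \<subseteq> P \<and> directed_in le D \<and> is_sup_in P le D s \<and> s \<in> \<Union>K"
    then obtain S where S: "S \<in> K" "s \<in> S" by blast
    have "scott_open P le S" using K S by blast
    then have "D \<inter> S \<noteq> {}" using h S unfolding scott_open_def by blast
    then obtain d where "d \<in> D" "d \<in> S" by blast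
    then show "D \<inter> \<Union>K \<noteq> {}" using S by blast
  qed

lemma scott_istopology: "istopology (scott_open P le)"
  unfolding istopology_def using scott_Int scott_Union by blast

lemma openin_scott: "openin (scott_topology P le) = scott_open P le"
  unfolding scott_topology_def by (rule topology_inverse'[OF scott_istopology])

lemma box_scott:
  assumes wf: "well_filtered X" and U: "openin X U"
  shows "scott_open (KX X) (\<lambda>K K'. K' \<subseteq> K) (box_set X U)"
  unfolding scott_open_def
proof (intro conjI allI impI ballI)
  show "box_set X U \<subseteq> KX X" unfolding box_set_def by blast
  fix x y assume "x \<in> box_set X U" "y \<in> KX X" "y \<subseteq> x"
  then show "y \<in> box_set X U" unfolding box_set_def by blast
next
  fix D s assume h: "D \<subseteq> KX X \<and> directed_in (\<lambda>K K'. K' \<subseteq> K) D \<and>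
      is_sup_in (KX X) (\<lambda>K K'. K' \<subseteq> K) D s \<and> s \<in> box_set X U"
  have Dne: "D \<noteq> {}" using h unfolding directed_in_def by blast
  have "\<Inter>D \<subseteq> s"
  proof
    fix x assume x: "x \<in> \<Inter>D"
    from Dne obtain d0 where "d0 \<in> D" by blast
    then have "d0 \<in> KX X" using h by blast
    then have "x \<in> topspace X" using x \<open>d0 \<in> D\<close> unfolding KX_def saturated_in_def by blast
    define UA where "UA = {y\<in>topspace X. spec_le X x y}"
    have A: "UA \<in> KX X" unfolding UA_def using \<open>x \<in> topspace X\<close> by (rule up_point_KX)
    have all: "\<forall>d\<in>D. UA \<subseteq> d"
    proof
      fix d assume "d \<in> D"
      then have "d \<in> KX X" "x \<in> d" using h x by blast+
      then show "UA \<subseteq> d"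
        unfolding KX_def saturated_in_def UA_def by blast
    qed
    have sup: "\<forall>t\<in>KX X. (\<forall>d\<in>D. t \<subseteq> d) \<longrightarrow> t \<subseteq> s"
      using h unfolding is_sup_in_def by simp
    have "UA \<subseteq> s"
      using sup A all by blast
    moreover have "x \<in> UA" unfolding UA_def using spec_le_refl[OF \<open>x \<in> topspace X\<close>] \<open>x \<in> topspace X\<close> by simp
    ultimately show "x \<in> s" by blast
  qed
  then have "\<Inter>D \<subseteq> U" using h unfolding box_set_def by blast
  moreover have "filtered_family D"
    using h unfolding filtered_family_def directed_in_def by blast
  ultimately obtain K where "K \<in> D" "K \<subseteq> U"
    using wf U h unfolding well_filtered_def by blast
  then show "D \<inter> box_set X U \<noteq> {}" using h unfolding box_set_def by blast
qed

lemma countable_nbhd: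
  assumes sc: "second_countable X" and K: "compactin X K"
  shows "\<exists>V::nat \<Rightarrow> 'a set. (\<forall>n. openin X (V n) \<and> K \<subseteq> V n) \<and>
           (\<forall>n m. n \<le> m \<longrightarrow> V m \<subseteq> V n) \<and>
           (\<forall>U. openin X U \<and> K \<subseteq> U \<longrightarrow> (\<exists>N. V N \<subseteq> U))"
proof -
  obtain B where B: "countable B" "\<forall>V\<in>B. openin X V"
     "\<forall>U x. openin X U \<and> x \<in> U \<longrightarrow> (\<exists>V\<in>B. x \<in> V \<and> V \<subseteq> U)"
    using sc unfolding second_countable_def by blast
  have fin_sub: "\<exists>C. finite C \<and> C \<subseteq> B \<and> K \<subseteq> \<Union>C \<and> \<Union>C \<subseteq> U"
    if U: "openin X U" "K \<subseteq> U" for U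
  proof -
    let ?U = "{b\<in>B. b \<subseteq> U}"
    have "\<forall>b\<in>?U. openin X b" using B by blast
    moreover have "K \<subseteq> \<Union>?U"
    proof
      fix x assume "x \<in> K"
      then have "x \<in> U" using U by blast
      then obtain b where "b \<in> B" "x \<in> b" "b \<subseteq> U" using B(3) U(1) by blast
      then show "x \<in> \<Union>?U" by blast
    qed
    ultimately obtain F where "finite F" "F \<subseteq> ?U" "K \<subseteq> \<Union>F"
      using K unfolding compactin_def by meson
    then show ?thesis by (intro exI[of _ F]) blast
  qed
  define F where "F = Union ` {C. finite C \<and> C \<subseteq> B \<and> K \<subseteq> \<Union>C}"
  have Fsub: "F \<subseteq> Union ` {C. finite C \<and> C \<subseteq> B}"
    unfolding F_def by (rule image_mono) blast
  have Fc: "countable F"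
    by (rule countable_subset[OF Fsub], rule countable_image, rule countable_Collect_finite_subset[OF B(1)])
  have "K \<subseteq> topspace X" using K by (rule compactin_subset_topspace)
  then obtain C0 where "finite C0 \<and> C0 \<subseteq> B \<and> K \<subseteq> \<Union>C0 \<and> \<Union>C0 \<subseteq> topspace X"
    using fin_sub[OF openin_topspace] by presburger
  then have Fne: "F \<noteq> {}" unfolding F_def by (metis (mono_tags, lifting) empty_iff image_eqI mem_Collect_eq)
  define w where "w = from_nat_into F"
  have wr: "range w = F" unfolding w_def using Fne Fc by simp
  have wF: "w i \<in> F" for i using wr by blast
  have wopen: "openin X (w i)" and wK: "K \<subseteq> w i" for i
  proof -
    obtain C where "w i = \<Union>C" "finite C" "C \<subseteq> B" "K \<subseteq> \<Union>C" using wF[of i] unfolding F_def by (auto elim!: imageE)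
    then show "openin X (w i)" using B(2) by (auto intro!: openin_Union)
    show "K \<subseteq> w i" using \<open>w i = \<Union>C\<close> \<open>K \<subseteq> \<Union>C\<close> by simp
  qed
  define V where "V n = \<Inter>(w ` {..n})" for n
  show ?thesis
  proof (intro exI[of _ V] conjI allI impI)
    fix n
    show "openin X (V n)" unfolding V_def by (rule openin_Inter) (auto simp: wopen)
    show "K \<subseteq> V n" unfolding V_def using wK by blast
  next
    fix n m :: nat assume "n \<le> m"
    then show "V m \<subseteq> V n" unfolding V_def by (intro Inter_anti_mono image_mono) simp
  next
    fix U assume U: "openin X U \<and> K \<subseteq> U"
    obtain C where C: "finite C \<and> C \<subseteq> B \<and> K \<subseteq> \<Union>C \<and> \<Union>C \<subseteq> U"
      using fin_sub[OF conjunct1[OF U] conjunct2[OF U]] by (elim exE)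
    then have "\<Union>C \<in> F" unfolding F_def by (intro image_eqI[of _ Union C]) simp_all
    then obtain N where "w N = \<Union>C" using wr by (metis rangeE)
    have "V N \<subseteq> w N" unfolding V_def by (rule INT_lower) simp
    moreover have "\<Union>C \<subseteq> U" using C by (elim conjE)
    ultimately have "V N \<subseteq> U" using \<open>w N = \<Union>C\<close> by (metis subset_trans)
    then show "\<exists>N. V N \<subseteq> U" by (rule exI)
  qed
qed

lemma compact_tail:
  fixes Km :: "nat \<Rightarrow> 'a set" and n :: nat
  assumes K: "compactin X K" and Km: "\<And>m. compactin X (Km m)"
    and conv: "\<And>U. openin X U \<Longrightarrow> K \<subseteq> U \<Longrightarrow> (\<exists>N. \<forall>m\<ge>N. Km m \<subseteq> U)"
  shows "compactin X (K \<union> (\<Union>m\<in>{n..}. Km m))"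
  unfolding compactin_def
proof (intro conjI allI impI)
  show "K \<union> (\<Union>m\<in>{n..}. Km m) \<subseteq> topspace X"
    using compactin_subset_topspace[OF K] compactin_subset_topspace[OF Km] by blast
  fix \<U> assume h: "(\<forall>U\<in>\<U>. openin X U) \<and> K \<union> (\<Union>m\<in>{n..}. Km m) \<subseteq> \<Union>\<U>"
  have hU: "\<forall>U\<in>\<U>. openin X U" using h by (elim conjE)
  have hc: "K \<union> (\<Union>m\<in>{n..}. Km m) \<subseteq> \<Union>\<U>" using h by (elim conjE)
  have "K \<subseteq> \<Union>\<U>" using hc by blast
  then obtain F0 where F0: "finite F0" "F0 \<subseteq> \<U>" "K \<subseteq> \<Union>F0"
    using K hU unfolding compactin_def by meson
  have "openin X (\<Union>F0)" using F0(2) hU by (intro openin_Union) blast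
  then obtain N where N: "\<forall>m\<ge>N. Km m \<subseteq> \<Union>F0" using conv F0(3) by blast
  have exG: "\<exists>G. finite G \<and> G \<subseteq> \<U> \<and> (n \<le> m \<longrightarrow> Km m \<subseteq> \<Union>G)" for m
  proof (cases "n \<le> m")
    case True
    then have "Km m \<subseteq> \<Union>\<U>" using hc by blast
    then obtain G where "finite G" "G \<subseteq> \<U>" "Km m \<subseteq> \<Union>G"
      using Km[of m] hU unfolding compactin_def by meson
    then show ?thesis by blast
  next
    case False
    then show ?thesis by (intro exI[of _ "{}"]) simp
  qed
  have "\<forall>m. \<exists>G. finite G \<and> G \<subseteq> \<U> \<and> (n \<le> m \<longrightarrow> Km m \<subseteq> \<Union>G)"
    using exG by (intro allI)
  then obtain G where G0: "\<forall>m. finite (G m) \<and> G m \<subseteq> \<U> \<and> (n \<le> m \<longrightarrow> Km m \<subseteq> \<Union>(G m))"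
    by (rule choice[THEN exE])
  have G: "finite (G m) \<and> G m \<subseteq> \<U> \<and> (n \<le> m \<longrightarrow> Km m \<subseteq> \<Union>(G m))" for m
    using G0 by (rule spec)
  define F where "F = F0 \<union> \<Union>(G ` {n..<N})"
  show "\<exists>\<F>. finite \<F> \<and> \<F> \<subseteq> \<U> \<and> K \<union> (\<Union>m\<in>{n..}. Km m) \<subseteq> \<Union>\<F>"
  proof (intro exI[of _ F] conjI)
    show "finite F" unfolding F_def
    proof (rule finite_UnI[OF F0(1)], rule finite_Union)
      show "finite (G ` {n..<N})" by simp
      fix M assume "M \<in> G ` {n..<N}"
      then obtain m where "M = G m" by blast
      then show "finite M" using G[of m] by simp
    qed
    have "G m \<subseteq> \<U>" for m using G[of m] by simp
    then show "F \<subseteq> \<U>" unfolding F_def using F0(2) by blast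
    show "K \<union> (\<Union>m\<in>{n..}. Km m) \<subseteq> \<Union>F"
    proof
      fix x assume "x \<in> K \<union> (\<Union>m\<in>{n..}. Km m)"
      then consider "x \<in> K" | m where "n \<le> m" "x \<in> Km m" by auto
      then show "x \<in> \<Union>F"
      proof cases
        case 1 then show ?thesis using F0(3) unfolding F_def by blast
      next
        case 2
        show ?thesis
        proof (cases "N \<le> m")
          case True
          then have "x \<in> \<Union>F0" using N 2 by blast
          then show ?thesis unfolding F_def by blast
        next
          case False
          then have "m \<in> {n..<N}" using 2 by simp
          moreover have "x \<in> \<Union>(G m)" using G[of m] 2 by blast
          ultimately show ?thesis unfolding F_def by blast
        qed
      qed
    qed
  qed
qed

lemma saturated_Un_tail:
  fixes Km :: "nat \<Rightarrow> 'a set"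
  assumes "saturated_in X K" "\<And>m. saturated_in X (Km m)"
  shows "saturated_in X (K \<union> (\<Union>m\<in>{n..}. Km m))"
  using assms unfolding saturated_in_def by blast

lemma scott_box:
  assumes sc: "second_countable X"
    and S: "scott_open (KX X) (\<lambda>K K'. K' \<subseteq> K) \<U>" and K: "K \<in> \<U>"
  shows "\<exists>U. openin X U \<and> K \<subseteq> U \<and> box_set X U \<subseteq> \<U>"
proof (rule ccontr)
  assume no: "\<not> ?thesis"
  have S1: "\<U> \<subseteq> KX X" using S unfolding scott_open_def by (elim conjE)
  have S2: "\<forall>x\<in>\<U>. \<forall>y\<in>KX X. y \<subseteq> x \<longrightarrow> y \<in> \<U>" using S unfolding scott_open_def by (elim conjE)
  have S3: "\<forall>D s. D \<subseteq> KX X \<and> directed_in (\<lambda>K K'. K' \<subseteq> K) D \<and>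
               is_sup_in (KX X) (\<lambda>K K'. K' \<subseteq> K) D s \<and> s \<in> \<U> \<longrightarrow> D \<inter> \<U> \<noteq> {}"
    using S unfolding scott_open_def by (elim conjE)
  have KK: "K \<in> KX X" using K S1 by blast
  have Kne: "K \<noteq> {}" and Kc: "compactin X K" and Ks: "saturated_in X K"
    using KK unfolding KX_def by auto
  obtain V :: "nat \<Rightarrow> 'a set" where V1: "\<And>n. openin X (V n) \<and> K \<subseteq> V n"
    and V2: "\<And>n m. n \<le> m \<Longrightarrow> V m \<subseteq> V n"
    and V3: "\<And>U. openin X U \<Longrightarrow> K \<subseteq> U \<Longrightarrow> (\<exists>N. V N \<subseteq> U)"
    using countable_nbhd[OF sc Kc] by metis
  have "\<exists>L. L \<in> KX X \<and> L \<subseteq> V n \<and> L \<notin> \<U>" for n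
  proof -
    have "\<not> box_set X (V n) \<subseteq> \<U>" using no V1[of n] by blast
    then show ?thesis unfolding box_set_def by blast
  qed
  then have "\<forall>n. \<exists>L. L \<in> KX X \<and> L \<subseteq> V n \<and> L \<notin> \<U>" by (intro allI)
  then obtain Km where Km0: "\<forall>n. Km n \<in> KX X \<and> Km n \<subseteq> V n \<and> Km n \<notin> \<U>"
    by (rule choice[THEN exE])
  have Km: "Km n \<in> KX X" "Km n \<subseteq> V n" "Km n \<notin> \<U>" for n
    using Km0 by blast+
  have conv: "\<exists>N. \<forall>m\<ge>N. Km m \<subseteq> U" if U1: "openin X U" and U2: "K \<subseteq> U" for U
  proof -
    obtain N where N: "V N \<subseteq> U" using V3[OF U1 U2] by blast
    have "Km m \<subseteq> U" if Nm: "N \<le> m" for m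
      using Km(2)[of m] V2[OF Nm] N by blast
    then show ?thesis by blast
  qed
  define L where "L n = K \<union> (\<Union>m\<in>{n..}. Km m)" for n
  have Lc: "compactin X (L n)" for n
    unfolding L_def
  proof (rule compact_tail[OF Kc])
    show "compactin X (Km m)" for m using Km(1)[of m] unfolding KX_def by blast
    show "\<exists>N. \<forall>m\<ge>N. Km m \<subseteq> U" if "openin X U" "K \<subseteq> U" for U using conv[OF that] .
  qed
  have Ls: "saturated_in X (L n)" for n
    unfolding L_def
  proof (rule saturated_Un_tail[OF Ks])
    show "saturated_in X (Km m)" for m using Km(1)[of m] unfolding KX_def by blast
  qed
  have LK: "L n \<in> KX X" for n
    unfolding KX_def using Lc[of n] Ls[of n] Kne unfolding L_def by blast
  have Lmono: "L m \<subseteq> L n" if "n \<le> m" for n m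
    unfolding L_def using that by auto
  have KL: "K \<subseteq> L n" for n unfolding L_def by blast
  have KmL: "Km n \<subseteq> L n" for n unfolding L_def by blast
  have "range L \<inter> \<U> \<noteq> {}"
  proof (rule S3[rule_format], intro conjI)
    show "range L \<subseteq> KX X" using LK by blast
    show "directed_in (\<lambda>K K'. K' \<subseteq> K) (range L)"
      unfolding directed_in_def
    proof (intro conjI ballI)
      show "range L \<noteq> {}" by simp
      fix a b assume "a \<in> range L" "b \<in> range L"
      then obtain i j where ij: "a = L i" "b = L j" by blast
      have "L (max i j) \<subseteq> a" "L (max i j) \<subseteq> b" using ij Lmono by simp_all
      then show "\<exists>c\<in>range L. c \<subseteq> a \<and> c \<subseteq> b" by blast
    qed
    show "is_sup_in (KX X) (\<lambda>K K'. K' \<subseteq> K) (range L) K"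
      unfolding is_sup_in_def
    proof (intro conjI ballI impI)
      show "K \<in> KX X" by (rule KK)
      fix d assume "d \<in> range L" then show "K \<subseteq> d" using KL by blast
    next
      fix t assume t: "t \<in> KX X" "\<forall>d\<in>range L. t \<subseteq> d"
      show "t \<subseteq> K"
      proof
        fix y assume y: "y \<in> t"
        then have yL: "y \<in> L n" for n using t(2) by blast
        show "y \<in> K"
        proof (rule ccontr)
          assume yK: "y \<notin> K"
          have "L 0 \<subseteq> topspace X" using compactin_subset_topspace[OF Lc[of 0]] .
          then have "y \<in> topspace X" using yL[of 0] by blast
          then obtain U where U: "openin X U" "K \<subseteq> U" "y \<notin> U"
            using sep_saturated[OF Ks _ yK] by blast
          then obtain N where N: "\<forall>m\<ge>N. Km m \<subseteq> U" using conv by blast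
          have "L N \<subseteq> U" unfolding L_def using N U(2) by blast
          then show False using yL[of N] U(3) by blast
        qed
      qed
    qed
    show "K \<in> \<U>" by (rule K)
  qed
  then obtain n where "L n \<in> \<U>" by blast
  then have "Km n \<in> \<U>" using S2 Km(1)[of n] KmL[of n] by blast
  then show False using Km(3) by blast
qed

theorem mainTheorem16:
  fixes X :: "'a topology"
  assumes "t0_space X" and "second_countable X" and "well_filtered X"
  shows "upper_vietoris X = scott_topology (KX X) (\<lambda>K K'. K' \<subseteq> K)"
proof -
  let ?B = "{box_set X U | U. openin X U}"
  have "openin (topology_generated_by ?B) S = scott_open (KX X) (\<lambda>K K'. K' \<subseteq> K) S" for S
  proof
    assume "openin (topology_generated_by ?B) S"
    then have g: "generate_topology_on ?B S" by (rule openin_topology_generated_by)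
    show "scott_open (KX X) (\<lambda>K K'. K' \<subseteq> K) S"
    proof (rule generate_topology_on_coarsest[OF scott_istopology _ g])
      fix T assume "T \<in> ?B"
      then obtain U where "T = box_set X U" "openin X U" by blast
      then show "scott_open (KX X) (\<lambda>K K'. K' \<subseteq> K) T"
        using box_scott[OF assms(3)] by simp
    qed
  next
    assume S: "scott_open (KX X) (\<lambda>K K'. K' \<subseteq> K) S"
    have S1: "S \<subseteq> KX X" using S unfolding scott_open_def by (elim conjE)
    define C where "C = {T \<in> ?B. T \<subseteq> S}"
    have "S = \<Union>C"
    proof
      show "\<Union>C \<subseteq> S" unfolding C_def by blast
      show "S \<subseteq> \<Union>C"
      proof
        fix K assume K: "K \<in> S"
        obtain U where U: "openin X U" "K \<subseteq> U" "box_set X U \<subseteq> S"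
          using scott_box[OF assms(2) S K] by blast
        have "K \<in> box_set X U" unfolding box_set_def using K S1 U(2) by blast
        moreover have "box_set X U \<in> C" unfolding C_def using U(1) U(3) by blast
        ultimately show "K \<in> \<Union>C" by blast
      qed
    qed
    moreover have "generate_topology_on ?B (\<Union>C)"
    proof (rule generate_topology_on.UN)
      fix k assume "k \<in> C"
      then have "k \<in> ?B" unfolding C_def by blast
      then show "generate_topology_on ?B k" by (rule generate_topology_on.Basis)
    qed
    ultimately show "openin (topology_generated_by ?B) S"
      by (simp add: openin_topology_generated_by_iff)
  qed
  then show ?thesis
    unfolding upper_vietoris_def topology_eq openin_scott by blast
qed

end
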